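(* Let $\phi:\mathbb{R}^n\to[-\infty,\infty]$ be a proper nearly convex function, $\Theta\subset\mathbb{R}^n$ a nearly convex set, and $G:\mathbb{R}^n\rightrightarrows\mathbb{R}^q$ a nearly convex set-valued mapping. Suppose $$\operatorname{ri}(\operatorname{dom}\phi)\cap\operatorname{ri}(\operatorname{dom} G)\cap\operatorname{ri}\Theta\neq\emptyset\quad\text{and}\quad 0\in\operatorname{ri}\big(G(\Theta\cap\operatorname{dom}\phi)\big).$$ Let $v_G(x,y^* )=\inf\{\langle -y^*,y\rangle: y\in G(x)\}$ and $h(y^* )=\inf\{\phi(x)+v_G(x,y^* ):x\in\Theta\}$, which is understood as $h(y^* )=\inf\{\phi(x)-\langle y^*,y\rangle: x\in\Theta,\ y\in G(x)\}$. Then $\mathcal{V}=\mathcal{V}_d$, where $\mathcal{V}=\inf\{\phi(x):x\in\Theta,\ 0\in G(x)\}$ and $\mathcal{V}_d=\sup_{y^*\in\mathbb{R}^q}h(y^* )$.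
   Context: A set $\Omega$ is nearly convex if there is a convex set $C$ with $C\subset\Omega\subset\overline{C}$; $\operatorname{ri}\Omega=\{a\in\Omega:\exists\delta>0,\ B(a;\delta)\cap\operatorname{aff}\Omega\subset\Omega\}$. A function is nearly convex if its epigraph is nearly convex, proper if its domain $\{\phi<\infty\}$ is nonempty and $\phi>-\infty$. For $G:\mathbb{R}^n\rightrightarrows\mathbb{R}^q$: $\operatorname{dom}G=\{x:G(x)\neq\emptyset\}$, $G$ nearly convex if $\operatorname{gph}G=\{(x,y):y\in G(x)\}$ is; $G(S)=\bigcup_{x\in S}G(x)$. Convention $\inf\emptyset=\infty$. *)

theory Defs
  imports "HOL-Analysis.Analysis"
begin

definition nearly_convex :: "'a::real_normed_vector set \<Rightarrow> bool" where
  "nearly_convex \<Omega> \<longleftrightarrow> (\<exists>C. convex C \<and> C \<subseteq> \<Omega> \<and> \<Omega> \<subseteq> closure C)"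

definition ri :: "'a::euclidean_space set \<Rightarrow> 'a set" where
  "ri \<Omega> = {a \<in> \<Omega>. \<exists>\<delta>>0. ball a \<delta> \<inter> affine hull \<Omega> \<subseteq> \<Omega>}"

definition epi :: "('a \<Rightarrow> ereal) \<Rightarrow> ('a \<times> real) set" where
  "epi \<phi> = {(x, t). \<phi> x \<le> ereal t}"

definition edom :: "('a \<Rightarrow> ereal) \<Rightarrow> 'a set" where
  "edom \<phi> = {x. \<phi> x < \<infinity>}"

definition proper_fun :: "('a \<Rightarrow> ereal) \<Rightarrow> bool" where
  "proper_fun \<phi> \<longleftrightarrow> edom \<phi> \<noteq> {} \<and> (\<forall>x. \<phi> x > -\<infinity>)"

definition nearly_convex_fun :: "('a::real_normed_vector \<Rightarrow> ereal) \<Rightarrow> bool" where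
  "nearly_convex_fun \<phi> \<longleftrightarrow> nearly_convex (epi \<phi>)"

definition sv_dom :: "('a \<Rightarrow> 'b set) \<Rightarrow> 'a set" where
  "sv_dom G = {x. G x \<noteq> {}}"

definition sv_gph :: "('a \<Rightarrow> 'b set) \<Rightarrow> ('a \<times> 'b) set" where
  "sv_gph G = {(x, y). y \<in> G x}"

definition sv_image :: "('a \<Rightarrow> 'b set) \<Rightarrow> 'a set \<Rightarrow> 'b set" where
  "sv_image G S = (\<Union>x\<in>S. G x)"

end

theory Submission imports Defs begin
lemma ri_eq: "ri S = rel_interior S"
  unfolding ri_def using mem_rel_interior_ball by blast

lemma nc_ri:
  fixes C :: "'n::euclidean_space set"
  assumes "convex C" "C \<subseteq> S" "S \<subseteq> closure C"
  shows "rel_interior S \<subseteq> rel_interior C"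
proof -
  have "affine hull S = affine hull (closure C)"
    by (metis assms(2,3) closure_same_affine_hull closure_subset hull_mono subset_antisym)
  then have "rel_interior S \<subseteq> rel_interior (closure C)"
    by (simp add: assms(3) rel_interior_mono)
  then show ?thesis using convex_rel_interior_closure[OF assms(1)] by simp
qed

lemma nc_img:
  fixes C :: "'n::euclidean_space set" and f :: "'n \<Rightarrow> 'm::euclidean_space"
  assumes "linear f" "C \<subseteq> S" "S \<subseteq> closure C"
  shows "f ` S \<subseteq> closure (f ` C)"
  using assms closure_linear_image_subset[OF assms(1), of C] by blast

lemma edom_fst: "edom \<phi> = fst ` epi \<phi>"
proof (rule set_eqI, rule iffI)
  fix x assume "x \<in> edom \<phi>"
  then have "\<phi> x < \<infinity>" by (simp add: edom_def)
  then obtain t where "\<phi> x \<le> ereal t"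
    by (metis ereal_infty_less(1) ereal_less_eq(2) less_ereal.elims(2) order.order_iff_strict)
  then show "x \<in> fst ` epi \<phi>" unfolding epi_def by force
next
  fix x assume "x \<in> fst ` epi \<phi>"
  then show "x \<in> edom \<phi>" unfolding epi_def edom_def by force
qed

lemma dom_fst: "sv_dom G = fst ` sv_gph G"
  unfolding sv_dom_def sv_gph_def by force

theorem theorem7p3:
  fixes \<phi> :: "'a::euclidean_space \<Rightarrow> ereal"
    and \<Theta> :: "'a set"
    and G :: "'a \<Rightarrow> 'b::euclidean_space set"
  assumes "proper_fun \<phi>" and "nearly_convex_fun \<phi>"
    and "nearly_convex \<Theta>"
    and "nearly_convex (sv_gph G)"
    and "ri (edom \<phi>) \<inter> ri (sv_dom G) \<inter> ri \<Theta> \<noteq> {}"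
    and "0 \<in> ri (sv_image G (\<Theta> \<inter> edom \<phi>))"
  shows "Inf {\<phi> x | x. x \<in> \<Theta> \<and> 0 \<in> G x}
       = (SUP ys::'b. Inf {\<phi> x - ereal (inner ys y) | x y. x \<in> \<Theta> \<and> y \<in> G x})"
proof -
  define V where "V = Inf {\<phi> x | x. x \<in> \<Theta> \<and> 0 \<in> G x}"
  have weak: "(SUP ys::'b. Inf {\<phi> x - ereal (inner ys y) | x y. x \<in> \<Theta> \<and> y \<in> G x}) \<le> V"
  proof (rule SUP_least)
    fix ys :: 'b
    show "Inf {\<phi> x - ereal (inner ys y) | x y. x \<in> \<Theta> \<and> y \<in> G x} \<le> V"
      unfolding V_def
    proof (rule Inf_greatest)
      fix r assume "r \<in> {\<phi> x | x. x \<in> \<Theta> \<and> 0 \<in> G x}"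
      then obtain x where x: "x \<in> \<Theta>" "0 \<in> G x" "r = \<phi> x" by blast
      then have "\<phi> x - ereal (inner ys 0) \<in> {\<phi> x - ereal (inner ys y) | x y. x \<in> \<Theta> \<and> y \<in> G x}"
        by blast
      then show "Inf {\<phi> x - ereal (inner ys y) | x y. x \<in> \<Theta> \<and> y \<in> G x} \<le> r"
        using x by (simp add: Inf_lower)
    qed
  qed
  define A where "A = {(y, t::real). \<exists>x\<in>\<Theta>. y \<in> G x \<and> \<phi> x \<le> ereal t}"
  have Aup: "(y, t + s) \<in> A" if yt: "(y,t) \<in> A" and s0: "s \<ge> 0" for y t s
  proof -
    obtain x where x: "x \<in> \<Theta>" "y \<in> G x" "\<phi> x \<le> ereal t" using yt unfolding A_def by auto
    have "ereal t \<le> ereal (t + s)" using s0 by simp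
    then have "\<phi> x \<le> ereal (t + s)" using x(3) by (rule order_trans[rotated])
    then show ?thesis using x unfolding A_def by blast
  qed
  have A0: "V \<le> ereal t" if "(0, t) \<in> A" for t
    using that unfolding A_def V_def by (auto intro: Inf_lower2)
  have fstA: "fst ` A = sv_image G (\<Theta> \<inter> edom \<phi>)"
  proof (rule set_eqI, rule iffI)
    fix y assume "y \<in> fst ` A"
    then obtain x t where "x \<in> \<Theta>" "y \<in> G x" "\<phi> x \<le> ereal t" unfolding A_def by auto
    moreover have "\<phi> x < \<infinity>" using calculation(3) by (rule order_le_less_trans) simp
    ultimately show "y \<in> sv_image G (\<Theta> \<inter> edom \<phi>)" unfolding sv_image_def edom_def
      by blast
  next
    fix y assume "y \<in> sv_image G (\<Theta> \<inter> edom \<phi>)"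
    then obtain x where x: "x \<in> \<Theta>" "y \<in> G x" "x \<in> edom \<phi>" unfolding sv_image_def by auto
    have "x \<in> fst ` epi \<phi>" using x(3) edom_fst[of \<phi>] by simp
    then obtain t where "(x,t) \<in> epi \<phi>" by force
    then have "\<phi> x \<le> ereal t" unfolding epi_def by simp
    then have "(y,t) \<in> A" using x(1,2) unfolding A_def by blast
    then show "y \<in> fst ` A" by force
  qed
  obtain t1 where t1: "(0, t1) \<in> A"
  proof -
    have "0 \<in> fst ` A" using assms(6) fstA unfolding ri_def by auto
    then show ?thesis using that by force
  qed
  obtain CE where CE: "convex CE" "CE \<subseteq> epi \<phi>" "epi \<phi> \<subseteq> closure CE"
    using assms(2) unfolding nearly_convex_fun_def nearly_convex_def by blast
  obtain CT where CT: "convex CT" "CT \<subseteq> \<Theta>" "\<Theta> \<subseteq> closure CT"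
    using assms(3) unfolding nearly_convex_def by blast
  obtain CG where CG: "convex CG" "CG \<subseteq> sv_gph G" "sv_gph G \<subseteq> closure CG"
    using assms(4) unfolding nearly_convex_def by blast
  obtain x0 where x0: "x0 \<in> rel_interior (edom \<phi>)" "x0 \<in> rel_interior (sv_dom G)" "x0 \<in> rel_interior \<Theta>"
    using assms(5) unfolding ri_eq by blast
  have x0T: "x0 \<in> rel_interior CT" using x0(3) nc_ri[OF CT] by blast
  have "x0 \<in> rel_interior (fst ` CG)"
  proof -
    have "fst ` CG \<subseteq> sv_dom G" using CG(2) dom_fst by (metis image_mono)
    moreover have "sv_dom G \<subseteq> closure (fst ` CG)" unfolding dom_fst
      using nc_img[OF linear_fst CG(2,3)] .
    ultimately show ?thesis using x0(2) nc_ri[of "fst ` CG" "sv_dom G"] CG(1) convex_linear_image[OF linear_fst] by blast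
  qed
  then obtain y0 where y0: "(x0, y0) \<in> rel_interior CG"
    using rel_interior_convex_linear_image[OF linear_fst CG(1)] by force
  have "x0 \<in> rel_interior (fst ` CE)"
  proof -
    have "fst ` CE \<subseteq> edom \<phi>" using CE(2) edom_fst by (metis image_mono)
    moreover have "edom \<phi> \<subseteq> closure (fst ` CE)" unfolding edom_fst
      using nc_img[OF linear_fst CE(2,3)] .
    ultimately show ?thesis using x0(1) nc_ri[of "fst ` CE" "edom \<phi>"] CE(1) convex_linear_image[OF linear_fst] by blast
  qed
  then obtain t0 where t0: "(x0, t0) \<in> rel_interior CE"
    using rel_interior_convex_linear_image[OF linear_fst CE(1)] by force
  define f2 :: "('a \<times> 'b) \<times> real \<Rightarrow> 'a \<times> ('b \<times> real)"
    where "f2 = (\<lambda>p. (fst (fst p), (snd (fst p), snd p)))"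
  define f3 :: "('a \<times> real) \<times> 'b \<Rightarrow> 'a \<times> ('b \<times> real)"
    where "f3 = (\<lambda>p. (fst (fst p), (snd p, snd (fst p))))"
  have lin2: "linear f2" unfolding f2_def by (auto simp: linear_iff algebra_simps)
  have lin3: "linear f3" unfolding f3_def by (auto simp: linear_iff algebra_simps)
  have inj2: "inj f2" unfolding f2_def inj_def by (auto simp: prod_eq_iff)
  have inj3: "inj f3" unfolding f3_def inj_def by (auto simp: prod_eq_iff)
  have m2: "(x, (y, t)) \<in> f2 ` (S \<times> UNIV) \<longleftrightarrow> (x, y) \<in> S" for x y t S
    unfolding f2_def by (force simp: image_iff)
  have m3: "(x, (y, t)) \<in> f3 ` (S \<times> UNIV) \<longleftrightarrow> (x, t) \<in> S" for x y t S
    unfolding f3_def by (force simp: image_iff)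
  define L1 :: "('a \<times> ('b \<times> real)) set" where "L1 = CT \<times> UNIV"
  define L2 where "L2 = f2 ` (CG \<times> UNIV)"
  define L3 where "L3 = f3 ` (CE \<times> UNIV)"
  have cL1: "convex L1" unfolding L1_def using CT(1) by (simp add: convex_Times)
  have cL2: "convex L2" unfolding L2_def using CG(1) lin2 by (simp add: convex_Times convex_linear_image)
  have cL3: "convex L3" unfolding L3_def using CE(1) lin3 by (simp add: convex_Times convex_linear_image)
  have rL1: "rel_interior L1 = rel_interior CT \<times> UNIV" unfolding L1_def
    using CT(1) by (simp add: rel_interior_Times)
  have rL2: "rel_interior L2 = f2 ` (rel_interior CG \<times> UNIV)" unfolding L2_def
    using CG(1) lin2 inj2 by (simp add: rel_interior_Times rel_interior_injective_linear_image linear_conv_bounded_linear)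
  have rL3: "rel_interior L3 = f3 ` (rel_interior CE \<times> UNIV)" unfolding L3_def
    using CE(1) lin3 inj3 by (simp add: rel_interior_Times rel_interior_injective_linear_image linear_conv_bounded_linear)
  have clL1: "closure L1 = closure CT \<times> UNIV" unfolding L1_def by (simp add: closure_Times)
  have clL2: "closure L2 = f2 ` (closure CG \<times> UNIV)" unfolding L2_def
    using closure_injective_linear_image[OF lin2 inj2, of "CG \<times> UNIV", symmetric] by (simp add: closure_Times)
  have clL3: "closure L3 = f3 ` (closure CE \<times> UNIV)" unfolding L3_def
    using closure_injective_linear_image[OF lin3 inj3, of "CE \<times> UNIV", symmetric] by (simp add: closure_Times)
  have w: "(x0, (y0, t0)) \<in> rel_interior L1 \<inter> rel_interior L2 \<inter> rel_interior L3"
  proof -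
    have "(x0, (y0, t0)) \<in> rel_interior L1" unfolding rL1 using x0T by blast
    moreover have "(x0, (y0, t0)) \<in> rel_interior L2" unfolding rL2 using y0 m2 by blast
    moreover have "(x0, (y0, t0)) \<in> rel_interior L3" unfolding rL3 using t0 m3 by blast
    ultimately show ?thesis by blast
  qed
  define CD where "CD = L1 \<inter> L2 \<inter> L3"
  have clCD: "closure CD = closure L1 \<inter> closure L2 \<inter> closure L3"
  proof -
    have "\<Inter>(rel_interior ` {L1,L2,L3}) \<noteq> {}" using w by blast
    then have "closure (\<Inter>{L1,L2,L3}) = \<Inter>(closure ` {L1,L2,L3})"
      using closure_Inter_convex[of "{L1, L2, L3}"] cL1 cL2 cL3 by blast
    then show ?thesis unfolding CD_def by (simp add: Int_assoc)
  qed
  define K where "K = snd ` CD"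
  have cK: "convex K" unfolding K_def CD_def using cL1 cL2 cL3
    by (simp add: convex_Int convex_linear_image linear_snd)
  have KA: "K \<subseteq> A"
  proof
    fix z assume "z \<in> K"
    then obtain x y t where z: "z = (y,t)" "(x,(y,t)) \<in> CD" unfolding K_def by force
    then have "x \<in> CT" "(x,y) \<in> CG" "(x,t) \<in> CE" unfolding CD_def L1_def L2_def L3_def using m2 m3 by auto
    then have "x \<in> \<Theta>" "y \<in> G x" "\<phi> x \<le> ereal t"
      using CT(2) CG(2) CE(2) unfolding sv_gph_def epi_def by auto
    then show "z \<in> A" unfolding A_def z by blast
  qed
  have AK: "A \<subseteq> closure K"
  proof
    fix z assume "z \<in> A"
    then obtain x y t where z: "z = (y,t)" "x \<in> \<Theta>" "y \<in> G x" "\<phi> x \<le> ereal t" unfolding A_def by blast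
    then have "x \<in> closure CT" "(x,y) \<in> closure CG" "(x,t) \<in> closure CE"
      using CT(3) CG(3) CE(3) unfolding sv_gph_def epi_def by auto
    then have "(x,(y,t)) \<in> closure CD" unfolding clCD clL1 clL2 clL3 using m2 m3 by simp
    then have "(y,t) \<in> snd ` closure CD" by force
    then show "z \<in> closure K" unfolding K_def z using closure_linear_image_subset[OF linear_snd] by blast
  qed
  have VA: "V \<le> ereal t1" using A0 t1 .
  show ?thesis
  proof (cases V)
    case MInf
    then show ?thesis using weak unfolding V_def by simp
  next
    case PInf
    then show ?thesis using VA by simp
  next
    case (real v)
    have fK: "0 \<in> rel_interior (fst ` K)"
    proof -
      have "0 \<in> rel_interior (fst ` A)" using assms(6) fstA by (simp add: ri_eq)
      moreover have "fst ` K \<subseteq> fst ` A" using KA by blast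
      moreover have "fst ` A \<subseteq> closure (fst ` K)" using nc_img[OF linear_fst KA AK] .
      ultimately show ?thesis using nc_ri[of "fst ` K" "fst ` A"] cK convex_linear_image[OF linear_fst] by blast
    qed
    have affK: "A \<subseteq> affine hull K"
      using AK closure_same_affine_hull[of K] hull_subset[of "closure K" affine] by blast
    have vert: "(0, s) \<in> affine hull K" for s
    proof -
      have p1: "(0, t1) \<in> affine hull K" using t1 affK by blast
      have p2: "(0, t1 + 1) \<in> affine hull K" using Aup[OF t1, of 1] affK by auto
      have "(t1 + 1 - s) *\<^sub>R (0, t1) + (s - t1) *\<^sub>R (0, t1 + 1) \<in> affine hull K"
        using mem_affine[OF affine_affine_hull p1 p2, of "t1 + 1 - s" "s - t1"] by simp
      moreover have "(t1 + 1 - s) *\<^sub>R (0, t1) + (s - t1) *\<^sub>R (0, t1 + 1) = (0::'b, s)"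
        by (simp add: algebra_simps)
      ultimately show ?thesis by simp
    qed
    define z where "z = (0::'b, v)"
    have znot: "z \<notin> rel_interior K"
    proof
      assume "z \<in> rel_interior K"
      then obtain e where e: "e > 0" "ball z e \<inter> affine hull K \<subseteq> K"
        using mem_rel_interior_ball by blast
      have "(0, v - e/2) \<in> ball z e" unfolding z_def using e(1) by (simp add: dist_Pair_Pair dist_real_def)
      then have "(0, v - e/2) \<in> A" using e(2) vert KA by blast
      then have "V \<le> ereal (v - e/2)" using A0 by blast
      then show False using real e(1) by simp
    qed
    have Kne: "rel_interior K \<noteq> {}"
    proof -
      have "(x0, (y0, t0)) \<in> CD" using w rel_interior_subset unfolding CD_def by blast
      then have "K \<noteq> {}" unfolding K_def by blast
      then show ?thesis using rel_interior_eq_empty[OF cK] by blast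
    qed
    obtain a b where ab: "(z + a) \<in> affine hull (insert z (rel_interior K))"
      "a \<noteq> 0" "a \<bullet> z \<le> b" "\<And>x. x \<in> rel_interior K \<Longrightarrow> a \<bullet> x \<ge> b"
      using separating_hyperplane_set_point_inaff[OF convex_rel_interior[OF cK] Kne znot] by blast
    have za: "z + a \<in> affine hull K"
    proof -
      have "insert z (rel_interior K) \<subseteq> affine hull K"
        using vert[of v] rel_interior_subset[of K] hull_subset[of K affine] unfolding z_def
        by (meson insert_subset order_trans)
      then have "affine hull (insert z (rel_interior K)) \<subseteq> affine hull K"
        by (simp add: hull_minimal affine_affine_hull)
      then show ?thesis using ab(1) by blast
    qed
    have half: "a \<bullet> x \<ge> b" if "x \<in> closure K" for x
    proof -
      have "closure (rel_interior K) \<subseteq> {x. b \<le> a \<bullet> x}"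
        using ab(4) by (intro closure_minimal) (auto simp: closed_halfspace_ge)
      then show ?thesis using that convex_closure_rel_interior[OF cK] by blast
    qed
    obtain g \<beta> where gb: "a = (g, \<beta>)" by (cases a)
    have inn: "a \<bullet> (y, t) = g \<bullet> y + \<beta> * t" for y t unfolding gb by (simp add: inner_Pair)
    have azv: "a \<bullet> z = \<beta> * v" by (simp add: z_def inn)
    have hA: "g \<bullet> y + \<beta> * t \<ge> b" if "(y, t) \<in> A" for y t
      using half[of "(y,t)"] that AK inn by auto
    have bpos: "\<beta> \<ge> 0"
    proof (rule ccontr)
      assume "\<not> \<beta> \<ge> 0"
      then have bn: "\<beta> < 0" by simp
      define s where "s = (\<bar>b\<bar> + \<bar>\<beta> * t1\<bar> + 1) / (- \<beta>)"
      have s0: "s \<ge> 0" unfolding s_def using bn by (intro divide_nonneg_pos) auto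
      have bs: "\<beta> * s = - (\<bar>b\<bar> + \<bar>\<beta> * t1\<bar> + 1)" unfolding s_def using bn by (simp add: field_simps)
      have "g \<bullet> 0 + \<beta> * (t1 + s) \<ge> b" using hA[OF Aup[OF t1 s0]] .
      then have "\<beta> * t1 + \<beta> * s \<ge> b" by (simp add: algebra_simps)
      then show False unfolding bs by linarith
    qed
    have bnz: "\<beta> \<noteq> 0"
    proof
      assume b0: "\<beta> = 0"
      have gy0: "g \<bullet> y \<ge> 0" if yK: "y \<in> fst ` K" for y
      proof -
        obtain t where "(y, t) \<in> K" using yK by force
        then have "(y, t) \<in> A" using KA by blast
        then show ?thesis using hA ab(3) azv b0 by force
      qed
      obtain e where e: "e > 0" "ball 0 e \<inter> affine hull (fst ` K) \<subseteq> fst ` K"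
        using fK mem_rel_interior_ball by blast
      have sp: "affine hull (fst ` K) = span (fst ` K)"
        using fK rel_interior_subset hull_subset by (metis affine_hull_span_0 subsetD)
      have gy: "g \<bullet> y = 0" if y: "y \<in> fst ` K" for y
      proof (cases "y = 0")
        case True then show ?thesis by simp
      next
        case False
        define c where "c = e / (2 * norm y)"
        have c0: "c > 0" unfolding c_def using e(1) False by simp
        have "(- c) *\<^sub>R y \<in> span (fst ` K)" using y by (intro span_mul span_base)
        moreover have "norm ((- c) *\<^sub>R y) < e" unfolding c_def using e(1) False by simp
        ultimately have "(- c) *\<^sub>R y \<in> fst ` K" using e(2) sp by (auto simp: dist_norm)
        then have "g \<bullet> ((- c) *\<^sub>R y) \<ge> 0" by (rule gy0)
        then have "g \<bullet> y \<le> 0" using c0 by (simp add: mult_le_0_iff)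
        then show ?thesis using gy0[OF y] by simp
      qed
      have "K \<subseteq> {x. a \<bullet> x = 0}"
      proof
        fix x assume "x \<in> K"
        moreover obtain y t where "x = (y,t)" by (cases x)
        ultimately have "x = (y,t)" "y \<in> fst ` K" by (auto intro: image_eqI[of _ fst x])
        then show "x \<in> {x. a \<bullet> x = 0}" using gy inn b0 by simp
      qed
      then have "affine hull K \<subseteq> {x. a \<bullet> x = 0}"
        by (intro hull_minimal) (auto simp: affine_hyperplane)
      then have "a \<bullet> (z + a) = 0" using za by blast
      moreover have "a \<bullet> z = 0" using azv b0 by simp
      ultimately have "a \<bullet> a = 0" by (simp add: inner_add_right)
      then show False using ab(2) by simp
    qed
    then have bp: "\<beta> > 0" using bpos by simp
    define ys where "ys = - (1 / \<beta>) *\<^sub>R g"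
    have "ereal v \<le> Inf {\<phi> x - ereal (inner ys y) | x y. x \<in> \<Theta> \<and> y \<in> G x}"
    proof (rule Inf_greatest)
      fix r assume "r \<in> {\<phi> x - ereal (inner ys y) | x y. x \<in> \<Theta> \<and> y \<in> G x}"
      then obtain x y where xy: "x \<in> \<Theta>" "y \<in> G x" "r = \<phi> x - ereal (inner ys y)" by blast
      show "ereal v \<le> r"
      proof (cases "\<phi> x")
        case (real q)
        then have "(y, q) \<in> A" using xy unfolding A_def by auto
        then have "g \<bullet> y + \<beta> * q \<ge> \<beta> * v" using hA ab(3) azv by force
        then have "v \<le> q + (g \<bullet> y) / \<beta>" using bp by (simp add: field_simps)
        moreover have "inner ys y = - (g \<bullet> y) / \<beta>" unfolding ys_def by simp
        ultimately show ?thesis using xy(3) real by simp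
      next
        case PInf then show ?thesis using xy(3) by simp
      next
        case MInf then show ?thesis using assms(1) unfolding proper_fun_def by (metis MInfty_neq_PInfty(1) ereal_infty_less(2))
      qed
    qed
    then have "V \<le> (SUP ys::'b. Inf {\<phi> x - ereal (inner ys y) | x y. x \<in> \<Theta> \<and> y \<in> G x})"
      using real by (metis (no_types, lifting) SUP_upper2 UNIV_I)
    then show ?thesis using weak unfolding V_def by (rule antisym)
  qed
qed
end
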